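(* Let $a:\mathbb{R}_{\ge 0}\to\mathbb{R}_{>0}$ be a continuous positive function converging to a constant $a^*>0$ at rate at least $\rho_a>0$. Consider the system \[ \dot y=y\bigl(1-a(t)y\bigr),\qquad \dot x=1-yz,\qquad \dot z=z(1-yz), \] with initial values $y(0)>0$, $z(0)>0$ and $x(0)=\ln z(0)$ (and assume the solution exists for all $t\ge0$). Then $y(t)\to 1/a^*$, $z(t)\to a^*$, $x(t)=\ln z(t)$ for all $t\ge 0$, and $x(t)\to\ln a^*$ at rate at least $\min\{\rho_a,1\}$. *)

theory Defs
  imports "HOL-Analysis.Analysis"
begin

text \<open>A function f on [0,\<infinity>) converges to L at (exponential) rate at least \<rho>:
  for every \<rho>' < \<rho> one has |f t - L| \<le> C e^{-\<rho>' t} for all t \<ge> 0,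
  i.e. limsup (1/t) ln |f t - L| \<le> -\<rho>.\<close>
definition converges_at_rate :: "(real \<Rightarrow> real) \<Rightarrow> real \<Rightarrow> real \<Rightarrow> bool" where
  "converges_at_rate f L \<rho> \<longleftrightarrow>
     (\<forall>\<rho>'<\<rho>. \<exists>C. \<forall>t\<ge>0. \<bar>f t - L\<bar> \<le> C * exp (- \<rho>' * t))"

end

theory Submission
  imports Defs
begin

lemma mono_within:
  fixes f f' :: "real \<Rightarrow> real"
  assumes d: "\<And>t. 0 \<le> t \<Longrightarrow> t \<le> T \<Longrightarrow> (f has_real_derivative f' t) (at t within {0..})"
  and nn: "\<And>t. 0 \<le> t \<Longrightarrow> t \<le> T \<Longrightarrow> f' t \<ge> 0"
  and st: "0 \<le> s" "s \<le> t" "t \<le> T"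
  shows "f s \<le> f t"
proof -
  have cont: "continuous_on {s..t} f"
    unfolding continuous_on_eq_continuous_within
  proof
    fix x assume x: "x \<in> {s..t}"
    have "continuous (at x within {0..}) f" using d[of x] x st by (intro DERIV_continuous) auto
    then show "continuous (at x within {s..t}) f"
      by (rule continuous_within_subset) (use st in auto)
  qed
  show ?thesis
  proof (rule DERIV_nonneg_imp_increasing_open[OF st(2) _ cont])
    fix x assume x: "s < x" "x < t"
    have "x \<in> interior {0::real..}" using x st by simp
    hence "at x within {0..} = at x" by (rule at_within_interior)
    with d[of x] x st have "DERIV f x :> f' x" by auto
    then show "\<exists>y. DERIV f x :> y \<and> y \<ge> 0" using nn[of x] x st by auto
  qed
qed

lemma lin_bound:
  fixes w e :: "real \<Rightarrow> real"
  assumes d: "\<And>t. 0 \<le> t \<Longrightarrow> (w has_real_derivative e t - w t) (at t within {0..})"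
   and eb: "\<And>t. 0 \<le> t \<Longrightarrow> \<bar>e t\<bar> \<le> C * exp (- r * t)" and r: "r < 1" and t: "0 \<le> t"
  shows "\<bar>w t\<bar> \<le> (\<bar>w 0\<bar> + C / (1 - r)) * exp (- r * t)"
proof -
  have C: "C \<ge> 0" using eb[of 0] by auto
  define F where "F = (\<lambda>s. exp s * w s)"
  define G where "G = (\<lambda>s. C / (1 - r) * exp ((1 - r) * s))"
  have Fd: "(F has_real_derivative exp s * e s) (at s within {0..})" if "0 \<le> s" for s
    unfolding F_def
    by (rule derivative_eq_intros d[OF that] refl | simp add: algebra_simps)+
  have Gd: "(G has_real_derivative C * exp ((1 - r) * s)) (at s within {0..})" for s
    unfolding G_def
    apply (rule derivative_eq_intros refl | simp)+
    using r by simp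
  have Fb: "\<bar>exp s * e s\<bar> \<le> C * exp ((1 - r) * s)" if "0 \<le> s" for s
  proof -
    have "\<bar>exp s * e s\<bar> = exp s * \<bar>e s\<bar>" by (simp add: abs_mult)
    also have "\<dots> \<le> exp s * (C * exp (- r * s))" using eb[OF that] by simp
    also have "\<dots> = C * exp ((1 - r) * s)"
    proof -
      have "(1 - r) * s = s + (- r * s)" by algebra
      then show ?thesis by (simp only: exp_add mult_ac)
    qed
    finally show ?thesis .
  qed
  have m1: "G 0 - F 0 \<le> G t - F t"
  proof (rule mono_within[where f="\<lambda>s. G s - F s" and f'="\<lambda>s. C * exp ((1 - r) * s) - exp s * e s" and T=t])
    fix s :: real assume s: "0 \<le> s" "s \<le> t"
    show "((\<lambda>s. G s - F s) has_real_derivative C * exp ((1 - r) * s) - exp s * e s) (at s within {0..})"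
      by (rule DERIV_diff[OF Gd Fd[OF s(1)]])
    show "0 \<le> C * exp ((1 - r) * s) - exp s * e s" using Fb[OF s(1)] by linarith
  qed (use t in auto)
  have m2: "G 0 + F 0 \<le> G t + F t"
  proof (rule mono_within[where f="\<lambda>s. G s + F s" and f'="\<lambda>s. C * exp ((1 - r) * s) + exp s * e s" and T=t])
    fix s :: real assume s: "0 \<le> s" "s \<le> t"
    show "((\<lambda>s. G s + F s) has_real_derivative C * exp ((1 - r) * s) + exp s * e s) (at s within {0..})"
      by (rule DERIV_add[OF Gd Fd[OF s(1)]])
    show "0 \<le> C * exp ((1 - r) * s) + exp s * e s" using Fb[OF s(1)] by linarith
  qed (use t in auto)
  have G0: "G 0 \<ge> 0" using C r unfolding G_def by simp
  have F0: "F 0 = w 0" unfolding F_def by simp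
  have Ft: "\<bar>F t\<bar> \<le> \<bar>w 0\<bar> + G t" using m1 m2 G0 F0 by linarith
  have e1: "exp (-t) * \<bar>F t\<bar> = \<bar>w t\<bar>" unfolding F_def by (simp add: abs_mult exp_minus field_simps)
  have e2: "exp (-t) * G t = C / (1 - r) * exp (- r * t)"
  proof -
    have "- r * t = -t + (1 - r) * t" by algebra
    then show ?thesis unfolding G_def by (simp only: exp_add mult_ac)
  qed
  have e3: "exp (-t) \<le> exp (- r * t)"
  proof -
    have "r * t \<le> 1 * t" using r t by (intro mult_right_mono) auto
    then show ?thesis by simp
  qed
  have "\<bar>w t\<bar> \<le> exp (-t) * \<bar>w 0\<bar> + exp (-t) * G t"
    using Ft e1 by (metis distrib_left exp_gt_zero mult_left_mono less_imp_le)
  also have "\<dots> \<le> exp (- r * t) * \<bar>w 0\<bar> + C / (1 - r) * exp (- r * t)"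
    using e2 e3 by (simp add: mult_right_mono)
  finally show ?thesis by (simp add: algebra_simps)
qed
lemma nonzero_lin:
  fixes f g :: "real \<Rightarrow> real"
  assumes d: "\<And>t. 0 \<le> t \<Longrightarrow> (f has_real_derivative f t * g t) (at t within {0..})"
   and gc: "continuous_on {0..} g" and f0: "f 0 \<noteq> 0" and t: "0 \<le> t"
  shows "f t \<noteq> 0"
proof -
  have "compact (g ` {0..t})"
    by (rule compact_continuous_image) (use gc in \<open>auto intro: continuous_on_subset\<close>)
  then obtain K where K: "\<And>s. s \<in> {0..t} \<Longrightarrow> \<bar>g s\<bar> \<le> K"
    using compact_imp_bounded bounded_iff by (metis image_eqI real_norm_def)
  define h where "h = (\<lambda>s. (f s)\<^sup>2 * exp (2 * K * s))"
  have hd: "(h has_real_derivative 2 * (f s)\<^sup>2 * exp (2 * K * s) * (g s + K)) (at s within {0..})"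
    if "0 \<le> s" for s
    unfolding h_def
    by (rule derivative_eq_intros d[OF that] refl | simp add: algebra_simps power2_eq_square)+
  have "h 0 \<le> h t"
  proof (rule mono_within[OF hd])
    fix s assume "0 \<le> s" "s \<le> t"
    then have "g s + K \<ge> 0" using K[of s] by auto
    then show "0 \<le> 2 * (f s)\<^sup>2 * exp (2 * K * s) * (g s + K)" by simp
  qed (use t in auto)
  then show ?thesis using f0 unfolding h_def by auto
qed

lemma pos_lin:
  fixes f g :: "real \<Rightarrow> real"
  assumes d: "\<And>t. 0 \<le> t \<Longrightarrow> (f has_real_derivative f t * g t) (at t within {0..})"
   and gc: "continuous_on {0..} g" and f0: "f 0 > 0" and t: "0 \<le> t"
  shows "f t > 0"
proof (rule ccontr)
  assume "\<not> f t > 0"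
  moreover have "continuous_on {0..t} f"
    unfolding continuous_on_eq_continuous_within
  proof
    fix x assume x: "x \<in> {0..t}"
    have "continuous (at x within {0..}) f" using d[of x] x by (intro DERIV_continuous) auto
    then show "continuous (at x within {0..t}) f"
      by (rule continuous_within_subset) auto
  qed
  ultimately obtain x where "0 \<le> x" "x \<le> t" "f x = 0"
    using IVT2'[of f t 0 0] f0 t by force
  then show False using nonzero_lin[OF d gc _ \<open>0 \<le> x\<close>] f0 by auto
qed

lemma lower_bound:
  fixes u :: "real \<Rightarrow> real"
  assumes uc: "continuous_on {0..} u" and up: "\<And>t. 0 \<le> t \<Longrightarrow> u t > 0"
   and ub: "\<And>t. 0 \<le> t \<Longrightarrow> \<bar>u t - L\<bar> \<le> B * exp (- r * t)" and r: "r > 0" and L: "L > 0"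
  shows "\<exists>m>0. \<forall>t\<ge>0. u t \<ge> m"
proof -
  obtain T where T: "T \<ge> 0" "B * exp (- r * T) \<le> L / 2"
  proof (cases "B \<le> 0")
    case True then show ?thesis using that[of 0] L by auto
  next
    case False
    define T where "T = max 0 (ln (2 * B / L) / r)"
    have "r * (ln (2 * B / L) / r) \<le> r * T" unfolding T_def
      using r by (intro mult_left_mono) auto
    then have "ln (2 * B / L) \<le> r * T" using r by simp
    then have "exp (- r * T) \<le> exp (- ln (2 * B / L))" by simp
    also have "\<dots> = L / (2 * B)" using False L by (simp add: exp_minus)
    finally have "B * exp (- r * T) \<le> B * (L / (2 * B))" using False by (intro mult_left_mono) auto
    also have "\<dots> = L / 2" using False by simp
    finally show ?thesis using that[of T] unfolding T_def by auto
  qed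
  have "continuous_on {0..T} u" using uc by (rule continuous_on_subset) auto
  then obtain x where x: "x \<in> {0..T}" "\<And>y. y \<in> {0..T} \<Longrightarrow> u x \<le> u y"
    using continuous_attains_inf[of "{0..T}" u] T by auto
  have "\<forall>t\<ge>0. u t \<ge> min (L/2) (u x)"
  proof (intro allI impI)
    fix t :: real assume t: "t \<ge> 0"
    show "u t \<ge> min (L/2) (u x)"
    proof (cases "t \<le> T")
      case True then have "u x \<le> u t" using x(2)[of t] t by auto
      then show ?thesis by linarith
    next
      case False
      have "exp (- r * t) \<le> exp (- r * T)" using False r by simp
      have B: "B \<ge> 0" using ub[of t] t by (smt (verit) abs_ge_zero exp_gt_zero zero_le_mult_iff)
      have "B * exp (- r * t) \<le> B * exp (- r * T)" using B \<open>exp (- r * t) \<le> exp (- r * T)\<close> by (simp add: mult_left_mono)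
      then have "B * exp (- r * t) \<le> L / 2" using T by linarith
      then show ?thesis using ub[of t] t by auto
    qed
  qed
  moreover have "min (L/2) (u x) > 0" using up[of x] x L by auto
  ultimately show ?thesis by blast
qed


lemma exp_lim: fixes r K :: real assumes "r > 0" shows "((\<lambda>t. K * exp (- r * t)) \<longlongrightarrow> 0) at_top"
proof -
  have "filterlim (\<lambda>t::real. - r * t) at_bot at_top"
    using assms by (intro filterlim_tendsto_neg_mult_at_bot[OF tendsto_const] filterlim_ident) auto
  then have "((\<lambda>t. exp (- r * t)) \<longlongrightarrow> 0) at_top"
    by (rule filterlim_compose[OF exp_at_bot])
  then show ?thesis by (rule tendsto_mult_right_zero)
qed

lemma ln_abs_bound: assumes "(s::real) > 0" shows "\<bar>ln s\<bar> \<le> \<bar>s - 1\<bar> * max 1 (1 / s)"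
proof (cases "s \<ge> 1")
  case True
  then have "0 \<le> ln s" "ln s \<le> s - 1" using assms ln_le_minus_one by auto
  moreover have "\<bar>s - 1\<bar> \<le> \<bar>s - 1\<bar> * max 1 (1 / s)" by (simp add: mult_le_cancel_left1)
  ultimately show ?thesis by linarith
next
  case False
  have "ln (1 / s) \<le> 1 / s - 1" using assms ln_le_minus_one by auto
  moreover have "ln (1 / s) = - ln s" using assms by (simp add: ln_div)
  moreover have "1 / s - 1 = \<bar>s - 1\<bar> * (1 / s)" using assms False by (simp add: field_simps)
  moreover have "\<bar>s - 1\<bar> * (1 / s) \<le> \<bar>s - 1\<bar> * max 1 (1 / s)" by (intro mult_left_mono) auto
  moreover have "ln s \<le> 0" using False assms by simp
  ultimately show ?thesis by linarith
qed
theorem lemma4p3: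
  fixes a y x z :: "real \<Rightarrow> real" and a_star \<rho>a :: real
  assumes a_cont: "continuous_on {0..} a"
    and a_pos: "\<And>t. t \<ge> 0 \<Longrightarrow> a t > 0"
    and a_star_pos: "a_star > 0"
    and rho_pos: "\<rho>a > 0"
    and a_rate: "converges_at_rate a a_star \<rho>a"
    and y_ode: "\<And>t. t \<ge> 0 \<Longrightarrow> (y has_real_derivative y t * (1 - a t * y t)) (at t within {0..})"
    and x_ode: "\<And>t. t \<ge> 0 \<Longrightarrow> (x has_real_derivative 1 - y t * z t) (at t within {0..})"
    and z_ode: "\<And>t. t \<ge> 0 \<Longrightarrow> (z has_real_derivative z t * (1 - y t * z t)) (at t within {0..})"
    and y0: "y 0 > 0" and z0: "z 0 > 0" and x0: "x 0 = ln (z 0)"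
  shows "(y \<longlongrightarrow> 1 / a_star) at_top \<and>
         (z \<longlongrightarrow> a_star) at_top \<and>
         (\<forall>t\<ge>0. x t = ln (z t)) \<and>
         converges_at_rate x (ln a_star) (min \<rho>a 1)"
proof -
  have dc: "continuous_on {0..} f" if "\<And>t. 0 \<le> t \<Longrightarrow> (f has_real_derivative f' t) (at t within {0..})"
    for f f' :: "real \<Rightarrow> real"
    unfolding continuous_on_eq_continuous_within by (meson DERIV_continuous atLeast_iff that)
  have yc: "continuous_on {0..} y" by (rule dc[OF y_ode])
  have zc: "continuous_on {0..} z" by (rule dc[OF z_ode])
  have gy: "continuous_on {0..} (\<lambda>t. 1 - a t * y t)"
    by (intro continuous_intros a_cont yc)
  have gz: "continuous_on {0..} (\<lambda>t. 1 - y t * z t)"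
    by (intro continuous_intros zc yc)
  have ypos: "y t > 0" if "t \<ge> 0" for t
    using pos_lin[where g="\<lambda>t. 1 - a t * y t", OF y_ode gy y0 that] by simp
  have zpos: "z t > 0" if "t \<ge> 0" for t
    using pos_lin[where g="\<lambda>t. 1 - y t * z t", OF z_ode gz z0 that] by simp
  have Dd: "((\<lambda>s. x s - ln (z s)) has_real_derivative 0) (at t within {0..})" if "t \<ge> 0" for t
    using zpos[OF that]
    by (rule_tac derivative_eq_intros x_ode[OF that] z_ode[OF that] refl | simp)+
  have xln: "\<forall>t\<ge>0. x t = ln (z t)"
  proof (intro allI impI)
    fix t :: real assume t: "t \<ge> 0"
    have "(\<lambda>s. x s - ln (z s)) 0 \<le> (\<lambda>s. x s - ln (z s)) t"
      by (rule mono_within[where f="\<lambda>s. x s - ln (z s)" and f'="\<lambda>_. 0" and T=t]) (use Dd t in auto)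
    moreover have "(\<lambda>s. - (x s - ln (z s))) 0 \<le> (\<lambda>s. - (x s - ln (z s))) t"
      by (rule mono_within[where f="\<lambda>s. - (x s - ln (z s))" and f'="\<lambda>_. - 0" and T=t])
      (use t in \<open>auto intro!: DERIV_minus[OF Dd, simplified]\<close>)
    ultimately show "x t = ln (z t)" using x0 by simp
  qed
  have ud: "((\<lambda>s. 1 / y s - a_star) has_real_derivative (a t - a_star) - (1 / y t - a_star)) (at t within {0..})"
    if "t \<ge> 0" for t
    using ypos[OF that]
    by (rule_tac derivative_eq_intros y_ode[OF that] refl | simp add: field_simps power2_eq_square)+
  have rd: "((\<lambda>s. 1 / z s - 1 / a_star) has_real_derivative (y t - 1 / a_star) - (1 / z t - 1 / a_star)) (at t within {0..})"
    if "t \<ge> 0" for t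
    using zpos[OF that]
    by (rule_tac derivative_eq_intros z_ode[OF that] refl | simp add: field_simps power2_eq_square)+
  have uc: "continuous_on {0..} (\<lambda>s. 1 / y s)"
    apply (intro continuous_intros yc) using ypos by fastforce
  have rc: "continuous_on {0..} (\<lambda>s. 1 / z s)"
    apply (intro continuous_intros zc) using zpos by fastforce
  have key: "\<exists>K1 K2 K3. \<forall>t\<ge>0. \<bar>y t - 1 / a_star\<bar> \<le> K1 * exp (- r * t) \<and>
      \<bar>1 / z t - 1 / a_star\<bar> \<le> K2 * exp (- r * t) \<and> \<bar>x t - ln a_star\<bar> \<le> K3 * exp (- r * t)"
    if r: "0 < r" "r < min \<rho>a 1" for r
  proof -
    obtain Ca where Ca: "\<And>t. t \<ge> 0 \<Longrightarrow> \<bar>a t - a_star\<bar> \<le> Ca * exp (- r * t)"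
      using a_rate r unfolding converges_at_rate_def by auto
    define B1 where "B1 = \<bar>1 / y 0 - a_star\<bar> + Ca / (1 - r)"
    have b1: "\<bar>1 / y t - a_star\<bar> \<le> B1 * exp (- r * t)" if "t \<ge> 0" for t
      unfolding B1_def using lin_bound[OF ud Ca _ that] r by simp
    obtain m1 where m1: "m1 > 0" "\<And>t. t \<ge> 0 \<Longrightarrow> 1 / y t \<ge> m1"
      using lower_bound[OF uc _ b1 r(1) a_star_pos] ypos by auto
    define K1 where "K1 = B1 / (m1 * a_star)"
    have k1: "\<bar>y t - 1 / a_star\<bar> \<le> K1 * exp (- r * t)" if "t \<ge> 0" for t
    proof -
      have yt: "y t > 0" using ypos that by auto
      have "\<bar>y t - 1 / a_star\<bar> = \<bar>1 / y t - a_star\<bar> / ((1 / y t) * a_star)"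
        using yt a_star_pos by (simp add: field_simps abs_div)
      also have "\<dots> \<le> \<bar>1 / y t - a_star\<bar> / (m1 * a_star)"
        using m1(2)[OF that] m1(1) a_star_pos yt
        by (intro divide_left_mono mult_right_mono) auto
      also have "\<dots> \<le> B1 * exp (- r * t) / (m1 * a_star)"
        using b1[OF that] m1(1) a_star_pos by (intro divide_right_mono) auto
      finally show ?thesis unfolding K1_def by simp
    qed
    define B2 where "B2 = \<bar>1 / z 0 - 1 / a_star\<bar> + K1 / (1 - r)"
    have b2: "\<bar>1 / z t - 1 / a_star\<bar> \<le> B2 * exp (- r * t)" if "t \<ge> 0" for t
      unfolding B2_def using lin_bound[OF rd k1 _ that] r by simp
    obtain m2 where m2: "m2 > 0" "\<And>t. t \<ge> 0 \<Longrightarrow> 1 / z t \<ge> m2"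
      using lower_bound[OF rc _ b2 r(1)] zpos a_star_pos by auto
    define K3 where "K3 = a_star * B2 * max 1 (1 / (m2 * a_star))"
    have k3: "\<bar>x t - ln a_star\<bar> \<le> K3 * exp (- r * t)" if "t \<ge> 0" for t
    proof -
      have zt: "z t > 0" using zpos that by auto
      define s where "s = a_star / z t"
      have s: "s > 0" unfolding s_def using zt a_star_pos by simp
      have "x t - ln a_star = - ln s" unfolding s_def using xln that zt a_star_pos
        by (simp add: ln_div)
      then have "\<bar>x t - ln a_star\<bar> = \<bar>ln s\<bar>" by simp
      also have "\<dots> \<le> \<bar>s - 1\<bar> * max 1 (1 / s)" by (rule ln_abs_bound[OF s])
      also have "\<dots> \<le> (a_star * (B2 * exp (- r * t))) * max 1 (1 / (m2 * a_star))"
      proof (rule mult_mono)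
        have "\<bar>s - 1\<bar> = a_star * \<bar>1 / z t - 1 / a_star\<bar>"
          unfolding s_def using a_star_pos zt by (simp add: field_simps abs_mult_pos')
        also have "\<dots> \<le> a_star * (B2 * exp (- r * t))"
          using b2[OF that] a_star_pos by simp
        finally show "\<bar>s - 1\<bar> \<le> a_star * (B2 * exp (- r * t))" .
        have "1 / s = (1 / a_star) * z t" unfolding s_def by simp
        also have "\<dots> \<le> (1 / a_star) * (1 / m2)"
          using m2(2)[OF that] m2(1) zt a_star_pos
          by (intro mult_left_mono) (auto simp: field_simps)
        finally show "max 1 (1 / s) \<le> max 1 (1 / (m2 * a_star))" by (simp add: mult.commute)
      qed (use b2[OF that] a_star_pos in \<open>auto intro!: mult_nonneg_nonneg intro: order_trans[OF abs_ge_zero]\<close>)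
      finally show ?thesis unfolding K3_def by (simp add: algebra_simps)
    qed
    show ?thesis using k1 b2 k3 by blast
  qed
  define r0 where "r0 = min \<rho>a 1 / 2"
  have r0: "0 < r0" "r0 < min \<rho>a 1" unfolding r0_def using rho_pos by auto
  obtain K1 K2 K3 where K: "\<And>t. t \<ge> 0 \<Longrightarrow> \<bar>y t - 1 / a_star\<bar> \<le> K1 * exp (- r0 * t) \<and>
      \<bar>1 / z t - 1 / a_star\<bar> \<le> K2 * exp (- r0 * t)"
    using key[OF r0] by blast
  have ylim: "(y \<longlongrightarrow> 1 / a_star) at_top"
  proof (rule LIM_zero_cancel, rule Lim_null_comparison[OF _ exp_lim[OF r0(1), of K1]])
    show "\<forall>\<^sub>F t in at_top. norm (y t - 1 / a_star) \<le> K1 * exp (- r0 * t)"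
      using eventually_ge_at_top[of 0] by eventually_elim (use K in auto)
  qed
  have rlim: "((\<lambda>t. 1 / z t) \<longlongrightarrow> 1 / a_star) at_top"
  proof (rule LIM_zero_cancel, rule Lim_null_comparison[OF _ exp_lim[OF r0(1), of K2]])
    show "\<forall>\<^sub>F t in at_top. norm (1 / z t - 1 / a_star) \<le> K2 * exp (- r0 * t)"
      using eventually_ge_at_top[of 0] by eventually_elim (use K in auto)
  qed
  have zlim: "(z \<longlongrightarrow> a_star) at_top"
    using tendsto_inverse[OF rlim] a_star_pos by simp
  have rate: "converges_at_rate x (ln a_star) (min \<rho>a 1)"
    unfolding converges_at_rate_def
  proof (intro allI impI)
    fix r' assume r': "r' < min \<rho>a 1"
    define r where "r = max r' r0"
    have r: "0 < r" "r < min \<rho>a 1" unfolding r_def using r' r0 by auto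
    obtain K3 where K3: "\<And>t. t \<ge> 0 \<Longrightarrow> \<bar>x t - ln a_star\<bar> \<le> K3 * exp (- r * t)"
      using key[OF r] by blast
    have K3p: "K3 \<ge> 0" using K3[of 0] by auto
    have "\<bar>x t - ln a_star\<bar> \<le> K3 * exp (- r' * t)" if t: "t \<ge> 0" for t
    proof -
      have "r' * t \<le> r * t" unfolding r_def using t by (intro mult_right_mono) auto
      then have "exp (- r * t) \<le> exp (- r' * t)" by simp
      then show ?thesis using K3[OF t] K3p by (meson mult_left_mono order_trans)
    qed
    then show "\<exists>C. \<forall>t\<ge>0. \<bar>x t - ln a_star\<bar> \<le> C * exp (- r' * t)" by blast
  qed
  show ?thesis using ylim zlim xln rate by blast
qed

end
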